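(* Let $\varphi\in\Phi_w(\Omega)$, let $r>1$ and $u_0\in L^{1,\varphi^r}(\Omega)$. Let $u\in L^1(\Omega)$, let $u_i\to u$ in $L^1(\Omega)$ and let $p_i\in(1,r)$ with $p_i\to1^+$. Then $E(u)\le\liminf_{i\to\infty}E_{p_i}(u_i)$.
   Context: $\Omega\subset\mathbb{R}^n$ is a bounded domain. A function $g$ on $(0,\infty)$ is $L$-almost increasing ($L\ge1$) if $g(s)\le Lg(t)$ whenever $0<s\le t$. A weak $\Phi$-function, $\varphi\in\Phi_w(\Omega)$, is $\varphi:\Omega\times[0,\infty)\to[0,\infty]$ such that for a.e. $x\in\Omega$: for every measurable $h:\Omega\to\mathbb{R}$, $y\mapsto\varphi(y,h(y))$ is measurable; $t\mapsto\varphi(x,t)$ is non-decreasing; $\varphi(x,0)=\lim_{t\to0^+}\varphi(x,t)=0$, $\lim_{t\to\infty}\varphi(x,t)=\infty$; $t\mapsto\varphi(x,t)/t$ is $L$-almost increasing on $(0,\infty)$ with $L$ independent of $x$. $\varphi^p(x,t):=\varphi(x,t)^p$. $\varrho_\varphi(u)=\int_\Omega\varphi(x,|u|)\,dx$; $\|u\|_\varphi=\inf\{\lambda>0:\varrho_\varphi(u/\lambda)\le1\}$, $\|v\|_\varphi=\||v|\|_\varphi$ for vector fields. $L^{1,\varphi}(\Omega)=\{u\in W^{1,1}(\Omega):\|u\|_{L^{1,\varphi}(\Omega)}<\infty\}$, $\|u\|_{L^{1,\varphi}(\Omega)}=\|u\|_{L^1(\Omega)}+\|\nabla u\|_\varphi$.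 $L^{1,\varphi}_0(\Omega)$ is the set of $u\in L^{1,\varphi}(\Omega)$ which are limits in $L^{1,\varphi}(\Omega)$ of sequences in $C_0^\infty(\Omega)$. For $p\in(1,r)$, $E_p:L^1(\Omega)\to[0,\infty]$, $E_p(u)=\int_\Omega\varphi(x,|\nabla u|)^p\,dx$ if $u-u_0\in L^{1,\varphi^p}_0(\Omega)$ and $E_p(u)=+\infty$ otherwise; $E(u)=\inf\{\liminf_{i\to\infty}\int_\Omega\varphi(x,|\nabla v_i|)\,dx: v_i-u_0\in L^{1,\varphi}_0(\Omega),\ v_i\to u\text{ in }L^1(\Omega)\}$. *)

theory Defs
  imports "HOL-Analysis.Analysis"
begin

fun Ck :: "nat \<Rightarrow> (real^'n \<Rightarrow> real) \<Rightarrow> bool" where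
  "Ck 0 f = continuous_on UNIV f"
| "Ck (Suc k) f = (continuous_on UNIV f \<and> (\<forall>x. f differentiable (at x)) \<and>
      (\<forall>i. Ck k (\<lambda>x. frechet_derivative f (at x) (axis i 1))))"

definition smooth_fun :: "(real^'n \<Rightarrow> real) \<Rightarrow> bool" where
  "smooth_fun f \<longleftrightarrow> (\<forall>k. Ck k f)"

definition test_fn :: "(real^'n) set \<Rightarrow> (real^'n \<Rightarrow> real) \<Rightarrow> bool" where
  "test_fn \<Omega> f \<longleftrightarrow> smooth_fun f \<and> compact (closure {x. f x \<noteq> 0}) \<and> closure {x. f x \<noteq> 0} \<subseteq> \<Omega>"

definition weak_grad :: "(real^'n) set \<Rightarrow> (real^'n \<Rightarrow> real) \<Rightarrow> (real^'n \<Rightarrow> real^'n) \<Rightarrow> bool" where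
  "weak_grad \<Omega> u G \<longleftrightarrow>
     (\<forall>j. integrable (lebesgue_on \<Omega>) (\<lambda>x. G x $ j)) \<and>
     (\<forall>\<psi>. test_fn \<Omega> \<psi> \<longrightarrow> (\<forall>j.
        (LINT x|lebesgue_on \<Omega>. u x * frechet_derivative \<psi> (at x) (axis j 1))
          = - (LINT x|lebesgue_on \<Omega>. G x $ j * \<psi> x)))"

definition W11 :: "(real^'n) set \<Rightarrow> (real^'n \<Rightarrow> real) \<Rightarrow> bool" where
  "W11 \<Omega> u \<longleftrightarrow> integrable (lebesgue_on \<Omega>) u \<and> (\<exists>G. weak_grad \<Omega> u G)"

definition grad :: "(real^'n) set \<Rightarrow> (real^'n \<Rightarrow> real) \<Rightarrow> (real^'n \<Rightarrow> real^'n)" where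
  "grad \<Omega> u = (SOME G. weak_grad \<Omega> u G)"

definition Phi_w :: "(real^'n) set \<Rightarrow> (real^'n \<Rightarrow> real \<Rightarrow> ennreal) \<Rightarrow> bool" where
  "Phi_w \<Omega> \<phi> \<longleftrightarrow>
     (\<forall>h. h \<in> borel_measurable (lebesgue_on \<Omega>) \<and> (\<forall>x. 0 \<le> h x) \<longrightarrow>
          (\<lambda>y. \<phi> y (h y)) \<in> borel_measurable (lebesgue_on \<Omega>)) \<and>
     (\<exists>L\<ge>1. AE x in lebesgue_on \<Omega>.
          mono_on {0..} (\<phi> x) \<and> \<phi> x 0 = 0 \<and> ((\<phi> x) \<longlongrightarrow> 0) (at_right 0) \<and>
          ((\<phi> x) \<longlongrightarrow> top) at_top \<and>
          (\<forall>s t. 0 < s \<and> s \<le> t \<longrightarrow> \<phi> x s / ennreal s \<le> ennreal L * (\<phi> x t / ennreal t)))"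

definition ennpow :: "ennreal \<Rightarrow> real \<Rightarrow> ennreal" where
  "ennpow a p = (if a = top then top else ennreal (enn2real a powr p))"

definition phi_pow :: "(real^'n \<Rightarrow> real \<Rightarrow> ennreal) \<Rightarrow> real \<Rightarrow> (real^'n \<Rightarrow> real \<Rightarrow> ennreal)" where
  "phi_pow \<phi> p = (\<lambda>x t. ennpow (\<phi> x t) p)"

definition modular :: "(real^'n) set \<Rightarrow> (real^'n \<Rightarrow> real \<Rightarrow> ennreal) \<Rightarrow> (real^'n \<Rightarrow> real) \<Rightarrow> ennreal" where
  "modular \<Omega> \<phi> f = (\<integral>\<^sup>+ x\<in>\<Omega>. \<phi> x \<bar>f x\<bar> \<partial>lebesgue)"

definition lux_norm :: "(real^'n) set \<Rightarrow> (real^'n \<Rightarrow> real \<Rightarrow> ennreal) \<Rightarrow> (real^'n \<Rightarrow> real) \<Rightarrow> ennreal" where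
  "lux_norm \<Omega> \<phi> f = Inf {ennreal lam | lam. lam > 0 \<and> modular \<Omega> \<phi> (\<lambda>x. f x / lam) \<le> 1}"

definition L1_norm :: "(real^'n) set \<Rightarrow> (real^'n \<Rightarrow> real) \<Rightarrow> ennreal" where
  "L1_norm \<Omega> u = (\<integral>\<^sup>+ x\<in>\<Omega>. ennreal \<bar>u x\<bar> \<partial>lebesgue)"

definition L1phi_norm :: "(real^'n) set \<Rightarrow> (real^'n \<Rightarrow> real \<Rightarrow> ennreal) \<Rightarrow> (real^'n \<Rightarrow> real) \<Rightarrow> ennreal" where
  "L1phi_norm \<Omega> \<phi> u = L1_norm \<Omega> u + lux_norm \<Omega> \<phi> (\<lambda>x. norm (grad \<Omega> u x))"

definition L1phi :: "(real^'n) set \<Rightarrow> (real^'n \<Rightarrow> real \<Rightarrow> ennreal) \<Rightarrow> (real^'n \<Rightarrow> real) \<Rightarrow> bool" where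
  "L1phi \<Omega> \<phi> u \<longleftrightarrow> W11 \<Omega> u \<and> L1phi_norm \<Omega> \<phi> u < top"

definition L1phi0 :: "(real^'n) set \<Rightarrow> (real^'n \<Rightarrow> real \<Rightarrow> ennreal) \<Rightarrow> (real^'n \<Rightarrow> real) \<Rightarrow> bool" where
  "L1phi0 \<Omega> \<phi> u \<longleftrightarrow> L1phi \<Omega> \<phi> u \<and>
     (\<exists>v. (\<forall>k. test_fn \<Omega> (v k)) \<and> (\<lambda>k. L1phi_norm \<Omega> \<phi> (\<lambda>x. u x - v k x)) \<longlonglongrightarrow> 0)"

definition L1_conv :: "(real^'n) set \<Rightarrow> (nat \<Rightarrow> real^'n \<Rightarrow> real) \<Rightarrow> (real^'n \<Rightarrow> real) \<Rightarrow> bool" where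
  "L1_conv \<Omega> v u \<longleftrightarrow> (\<forall>i. integrable (lebesgue_on \<Omega>) (v i)) \<and> integrable (lebesgue_on \<Omega>) u \<and>
     (\<lambda>i. L1_norm \<Omega> (\<lambda>x. v i x - u x)) \<longlonglongrightarrow> 0"

definition E_p :: "(real^'n) set \<Rightarrow> (real^'n \<Rightarrow> real \<Rightarrow> ennreal) \<Rightarrow> (real^'n \<Rightarrow> real) \<Rightarrow> real
                    \<Rightarrow> (real^'n \<Rightarrow> real) \<Rightarrow> ennreal" where
  "E_p \<Omega> \<phi> u0 p u =
     (if L1phi0 \<Omega> (phi_pow \<phi> p) (\<lambda>x. u x - u0 x)
      then (\<integral>\<^sup>+ x\<in>\<Omega>. ennpow (\<phi> x (norm (grad \<Omega> u x))) p \<partial>lebesgue)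
      else top)"

definition E_1 :: "(real^'n) set \<Rightarrow> (real^'n \<Rightarrow> real \<Rightarrow> ennreal) \<Rightarrow> (real^'n \<Rightarrow> real)
                    \<Rightarrow> (real^'n \<Rightarrow> real) \<Rightarrow> ennreal" where
  "E_1 \<Omega> \<phi> u0 u = Inf {liminf (\<lambda>i. \<integral>\<^sup>+ x\<in>\<Omega>. \<phi> x (norm (grad \<Omega> (v i) x)) \<partial>lebesgue) | v.
        (\<forall>i. L1phi0 \<Omega> \<phi> (\<lambda>x. v i x - u0 x)) \<and> L1_conv \<Omega> v u}"

end

theory Submission
  imports Defs
begin


lemma nn_cmult_le:
  fixes c :: ennreal
  assumes "c < top"
  shows "(\<integral>\<^sup>+x. c * f x \<partial>M) \<le> c * integral\<^sup>N M f"
proof (cases "c = 0")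
  case True then show ?thesis by simp
next
  case False
  show ?thesis
    unfolding nn_integral_def
  proof (rule SUP_least)
    fix g assume g: "g \<in> {g. simple_function M g \<and> g \<le> (\<lambda>x. c * f x)}"
    define g' where "g' = (\<lambda>x. g x / c)"
    have sg': "simple_function M g'" using g unfolding g'_def
      by (auto intro: simple_function_compose1[where g="\<lambda>y. y / c"])
    have gg: "g x = c * g' x" for x
    proof -
      have "c * g' x = g x * c / c" unfolding g'_def by (simp add: ennreal_times_divide mult.commute)
      also have "\<dots> = g x" using False assms by (intro ennreal_mult_divide_eq) auto
      finally show ?thesis by simp
    qed
    have "g' \<le> f" unfolding le_fun_def g'_def
    proof
      fix x have "g x \<le> c * f x" using g by (auto simp: le_fun_def)
      then show "g x / c \<le> f x" using False by (intro divide_le_posI_ennreal) (auto simp: zero_less_iff_neq_zero)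
    qed
    have "integral\<^sup>S M g = integral\<^sup>S M (\<lambda>x. c * g' x)"
      by (intro simple_integral_cong) (simp add: gg[symmetric])
    also have "\<dots> = c * integral\<^sup>S M g'" using sg' by simp
    also have "integral\<^sup>S M g' \<le> (SUP g \<in> {g. simple_function M g \<and> g \<le> f}. integral\<^sup>S M g)"
      using sg' \<open>g' \<le> f\<close> by (intro SUP_upper) auto
    finally show "integral\<^sup>S M g \<le> c * (SUP g \<in> {g. simple_function M g \<and> g \<le> f}. integral\<^sup>S M g)"
      by (metis mult_left_mono zero_le)
  qed
qed

lemma nn_add_le:
  fixes g h :: "'a \<Rightarrow> ennreal"
  assumes sg: "simple_function M g" and fin: "\<And>x. g x < top"
  shows "(\<integral>\<^sup>+x. g x + h x \<partial>M) \<le> integral\<^sup>N M g + integral\<^sup>N M h"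
  unfolding nn_integral_def[of M "\<lambda>x. g x + h x"]
proof (rule SUP_least)
  fix s assume s: "s \<in> {s. simple_function M s \<and> s \<le> (\<lambda>x. g x + h x)}"
  define s' where "s' = (\<lambda>x. s x - g x)"
  have ss': "simple_function M s'" using s sg unfolding s'_def
    by (auto intro: simple_function_compose2)
  have le1: "s x \<le> g x + s' x" for x unfolding s'_def
    by (metis add.commute diff_add_cancel_ennreal le_iff_add linorder_le_cases ennreal_minus_eq_0 add_0 order.refl add_increasing2 zero_le)
  have le2: "s' x \<le> h x" for x using s fin[of x] unfolding s'_def le_fun_def
    by (auto simp add: ennreal_minus_le_iff add.commute)
  have "integral\<^sup>S M s \<le> integral\<^sup>S M (\<lambda>x. g x + s' x)"
    using s ss' sg le1 by (intro simple_integral_mono) auto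
  also have "\<dots> = integral\<^sup>S M g + integral\<^sup>S M s'"
    using ss' sg by simp
  also have "integral\<^sup>S M s' \<le> integral\<^sup>N M h"
    using ss' le2 by (metis nn_integral_eq_simple_integral nn_integral_mono)
  also have "integral\<^sup>S M g = integral\<^sup>N M g" using sg by (simp add: nn_integral_eq_simple_integral)
  finally show "integral\<^sup>S M s \<le> integral\<^sup>N M g + integral\<^sup>N M h" by (simp add: add_left_mono)
qed

lemma phi_scale:
  fixes F :: "real \<Rightarrow> ennreal"
  assumes F0: "F 0 = 0"
    and inc: "\<forall>s t. 0 < s \<and> s \<le> t \<longrightarrow> F s / ennreal s \<le> ennreal L * (F t / ennreal t)"
    and t: "t \<ge> 0" and K: "K \<ge> 1" and L: "L \<ge> 0"
  shows "F (t / K) \<le> ennreal (L / K) * F t"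
proof (cases "t = 0")
  case True then show ?thesis using F0 by simp
next
  case False
  then have tp: "t > 0" using t by simp
  define s where "s = t / K"
  have sp: "s > 0" and st: "s \<le> t" using tp K unfolding s_def by (auto simp: divide_le_eq)
  have "F s = F s / ennreal s * ennreal s"
    using sp by (simp add: ennreal_divide_times)
  also have "\<dots> \<le> ennreal L * (F t / ennreal t) * ennreal s"
    using inc sp st by (intro mult_right_mono) auto
  also have "\<dots> = ennreal L * F t * (ennreal s / ennreal t)"
    by (simp add: divide_ennreal_def mult_ac)
  also have "ennreal s / ennreal t = ennreal (1 / K)"
    using tp K unfolding s_def by (simp add: divide_ennreal)
  also have "ennreal L * F t * ennreal (1 / K) = ennreal (L / K) * F t"
  proof -
    have "ennreal L * ennreal (1 / K) = ennreal (L / K)"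
      using L K by (simp add: ennreal_mult[symmetric])
    then show ?thesis by (metis mult.assoc mult.commute)
  qed
  finally show ?thesis unfolding s_def .
qed

lemma real_pow_bound:
  fixes x d p :: real
  assumes "x \<ge> 0" "d > 0" "p \<ge> 1"
  shows "x \<le> d + d powr (1 - p) * x powr p"
proof (cases "x \<le> d")
  case True
  then show ?thesis using assms by (simp add: add_increasing2)
next
  case False
  then have xd: "x > d" by simp
  have "x powr p = x * x powr (p - 1)"
    using xd assms by (simp add: powr_diff powr_one)
  moreover have "x powr (p - 1) \<ge> d powr (p - 1)"
    using xd assms by (intro powr_mono2) auto
  moreover have "d powr (1 - p) * d powr (p - 1) = 1"
    using assms by (simp add: powr_add[symmetric])
  ultimately have "d powr (1 - p) * x powr p = x * (d powr (1 - p) * x powr (p - 1))"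
    and "d powr (1 - p) * x powr (p - 1) \<ge> 1"
    by (simp_all add: mult_ac) (metis mult_left_mono powr_ge_zero)
  then have "d powr (1 - p) * x powr p \<ge> x * 1"
    using xd assms by (metis mult_left_mono less_le_trans less_imp_le)
  then show ?thesis using assms by simp
qed

lemma ennpow_bound:
  assumes "d > 0" "p \<ge> 1"
  shows "a \<le> ennreal d + ennreal (d powr (1 - p)) * ennpow a p"
proof (cases "a = top")
  case True
  then show ?thesis using assms by (simp add: ennpow_def ennreal_mult_top)
next
  case False
  then obtain x where x: "a = ennreal x" "x \<ge> 0" by (cases a) auto
  have "x \<le> d + d powr (1 - p) * x powr p" using real_pow_bound[OF x(2) assms] .
  then have "ennreal x \<le> ennreal (d + d powr (1 - p) * x powr p)" by (rule ennreal_leI)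
  also have "\<dots> = ennreal d + ennreal (d powr (1 - p)) * ennreal (x powr p)"
    using assms by (simp add: ennreal_plus ennreal_mult)
  finally show ?thesis using x by (simp add: ennpow_def)
qed



locale emb =
  fixes \<Omega> :: "(real^'n) set" and \<phi> :: "real^'n \<Rightarrow> real \<Rightarrow> ennreal" and m L p :: real
  assumes \<Omega>m: "\<Omega> \<in> sets lebesgue" and m\<Omega>: "emeasure lebesgue \<Omega> = ennreal m" and m0: "m \<ge> 0"
    and L: "L \<ge> 1"
    and AE\<phi>: "AE x in lebesgue. x \<in> \<Omega> \<longrightarrow> (\<phi> x 0 = 0 \<and>
       (\<forall>s t. 0 < s \<and> s \<le> t \<longrightarrow> \<phi> x s / ennreal s \<le> ennreal L * (\<phi> x t / ennreal t)))"
    and p: "p \<ge> 1"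
begin

definition "K = L * (m + 1)"

lemma K1: "K \<ge> 1"
proof -
  have "1 * 1 \<le> L * (m + 1)" using L m0 by (intro mult_mono) auto
  then show ?thesis unfolding K_def by simp
qed

lemma modular_embed:
  assumes lam: "lam > 0" and md: "modular \<Omega> (phi_pow \<phi> p) (\<lambda>x. g x / lam) \<le> 1"
  shows "modular \<Omega> \<phi> (\<lambda>x. g x / (K * lam)) \<le> 1"
proof -
  have Kp: "K > 0" using K1 by simp
  have pt: "AE x in lebesgue. \<phi> x \<bar>g x / (K * lam)\<bar> * indicator \<Omega> x \<le>
      ennreal (L / K) * (indicator \<Omega> x + phi_pow \<phi> p x \<bar>g x / lam\<bar> * indicator \<Omega> x)"
    using AE\<phi>
  proof (rule eventually_mono)
    fix x assume hx: "x \<in> \<Omega> \<longrightarrow> (\<phi> x 0 = 0 \<and>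
       (\<forall>s t. 0 < s \<and> s \<le> t \<longrightarrow> \<phi> x s / ennreal s \<le> ennreal L * (\<phi> x t / ennreal t)))"
    show "\<phi> x \<bar>g x / (K * lam)\<bar> * indicator \<Omega> x \<le>
      ennreal (L / K) * (indicator \<Omega> x + phi_pow \<phi> p x \<bar>g x / lam\<bar> * indicator \<Omega> x)"
    proof (cases "x \<in> \<Omega>")
      case False then show ?thesis by simp
    next
      case True
      have eq: "\<bar>g x / (K * lam)\<bar> = \<bar>g x / lam\<bar> / K"
        using Kp lam by (simp add: abs_divide)
      have "\<phi> x (\<bar>g x / lam\<bar> / K) \<le> ennreal (L / K) * \<phi> x \<bar>g x / lam\<bar>"
        using hx True K1 L by (intro phi_scale) auto
      also have "\<phi> x \<bar>g x / lam\<bar> \<le> ennreal 1 + ennreal (1 powr (1 - p)) * ennpow (\<phi> x \<bar>g x / lam\<bar>) p"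
        using p by (intro ennpow_bound) auto
      finally have c: "\<phi> x (\<bar>g x / lam\<bar> / K) \<le> ennreal (L / K) * (1 + ennpow (\<phi> x \<bar>g x / lam\<bar>) p)"
        by (simp add: mult_left_mono)
      then have "\<phi> x \<bar>g x / (K * lam)\<bar> \<le> ennreal (L / K) * (1 + ennpow (\<phi> x \<bar>g x / lam\<bar>) p)"
        by (simp only: eq)
      then show ?thesis using True by (simp add: phi_pow_def)
    qed
  qed
  have "modular \<Omega> \<phi> (\<lambda>x. g x / (K * lam)) = (\<integral>\<^sup>+x. \<phi> x \<bar>g x / (K * lam)\<bar> * indicator \<Omega> x \<partial>lebesgue)"
    unfolding modular_def by simp
  also have "\<dots> \<le> (\<integral>\<^sup>+x. ennreal (L / K) * (indicator \<Omega> x + phi_pow \<phi> p x \<bar>g x / lam\<bar> * indicator \<Omega> x) \<partial>lebesgue)"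
    by (rule nn_integral_mono_AE[OF pt])
  also have "\<dots> \<le> ennreal (L / K) * (\<integral>\<^sup>+x. indicator \<Omega> x + phi_pow \<phi> p x \<bar>g x / lam\<bar> * indicator \<Omega> x \<partial>lebesgue)"
    by (rule nn_cmult_le) simp
  also have "(\<integral>\<^sup>+x. indicator \<Omega> x + phi_pow \<phi> p x \<bar>g x / lam\<bar> * indicator \<Omega> x \<partial>lebesgue)
      \<le> (\<integral>\<^sup>+x. indicator \<Omega> x \<partial>lebesgue) + (\<integral>\<^sup>+x. phi_pow \<phi> p x \<bar>g x / lam\<bar> * indicator \<Omega> x \<partial>lebesgue)"
    apply (rule nn_add_le)
     apply (rule simple_function_indicator[OF \<Omega>m])
    apply (simp add: indicator_def)
    done
  also have "(\<integral>\<^sup>+x. indicator \<Omega> x \<partial>lebesgue) = ennreal m"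
    using \<Omega>m m\<Omega> by simp
  also have "(\<integral>\<^sup>+x. phi_pow \<phi> p x \<bar>g x / lam\<bar> * indicator \<Omega> x \<partial>lebesgue) \<le> 1"
    using md unfolding modular_def by simp
  finally have "modular \<Omega> \<phi> (\<lambda>x. g x / (K * lam)) \<le> ennreal (L / K) * (ennreal m + 1)"
    by (simp add: mult_left_mono add_left_mono)
  also have "\<dots> = ennreal (L / K * (m + 1))"
  proof -
    have "ennreal m + 1 = ennreal (m + 1)" using m0 by simp
    moreover have "ennreal (L / K) * ennreal (m + 1) = ennreal (L / K * (m + 1))"
      using L Kp m0 by (intro ennreal_mult[symmetric]) auto
    ultimately show ?thesis by simp
  qed
  also have "L / K * (m + 1) = 1"
    using Kp unfolding K_def by (simp add: field_simps)
  finally show ?thesis by simp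
qed

lemma lux_embed:
  "lux_norm \<Omega> \<phi> g \<le> ennreal K * lux_norm \<Omega> (phi_pow \<phi> p) g"
proof -
  have Kp: "K > 0" using K1 by simp
  define X where "X = lux_norm \<Omega> \<phi> g"
  have "X / ennreal K \<le> lux_norm \<Omega> (phi_pow \<phi> p) g"
    unfolding lux_norm_def
  proof (rule Inf_greatest)
    fix y assume "y \<in> {ennreal lam |lam. lam > 0 \<and> modular \<Omega> (phi_pow \<phi> p) (\<lambda>x. g x / lam) \<le> 1}"
    then obtain lam where y: "y = ennreal lam" "lam > 0" "modular \<Omega> (phi_pow \<phi> p) (\<lambda>x. g x / lam) \<le> 1"
      by auto
    have "X \<le> ennreal (K * lam)"
      unfolding X_def lux_norm_def
      by (rule Inf_lower) (use modular_embed[OF y(2,3)] Kp y(2) in auto)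
    then have "X \<le> ennreal K * y" using Kp y by (simp add: ennreal_mult)
    then show "X / ennreal K \<le> y"
      using Kp by (intro divide_le_posI_ennreal) auto
  qed
  then have "X / ennreal K * ennreal K \<le> lux_norm \<Omega> (phi_pow \<phi> p) g * ennreal K"
    by (rule mult_right_mono) simp
  moreover have "X / ennreal K * ennreal K = X"
    using Kp by (simp add: ennreal_divide_times)
  ultimately show ?thesis unfolding X_def by (simp add: mult.commute)
qed

lemma norm_embed:
  "L1phi_norm \<Omega> \<phi> u \<le> ennreal K * L1phi_norm \<Omega> (phi_pow \<phi> p) u"
proof -
  have "L1_norm \<Omega> u \<le> ennreal K * L1_norm \<Omega> u"
  proof -
    have "1 * L1_norm \<Omega> u \<le> ennreal K * L1_norm \<Omega> u"
      by (rule mult_right_mono) (use K1 in simp_all)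
    then show ?thesis by simp
  qed
  then show ?thesis
    unfolding L1phi_norm_def using lux_embed[of "\<lambda>x. norm (grad \<Omega> u x)"]
    by (simp add: distrib_left add_mono)
qed

lemma L1phi0_embed:
  assumes "L1phi0 \<Omega> (phi_pow \<phi> p) w"
  shows "L1phi0 \<Omega> \<phi> w"
proof -
  from assms obtain v where w: "W11 \<Omega> w" "L1phi_norm \<Omega> (phi_pow \<phi> p) w < top"
    and v: "\<forall>k. test_fn \<Omega> (v k)" "(\<lambda>k. L1phi_norm \<Omega> (phi_pow \<phi> p) (\<lambda>x. w x - v k x)) \<longlonglongrightarrow> 0"
    unfolding L1phi0_def L1phi_def by auto
  have fin: "L1phi_norm \<Omega> \<phi> w < top"
  proof -
    have "ennreal K * L1phi_norm \<Omega> (phi_pow \<phi> p) w < top"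
      using w(2) by (simp add: ennreal_mult_less_top)
    then show ?thesis using norm_embed[of w] by (rule le_less_trans[rotated])
  qed
  have lim: "(\<lambda>k. L1phi_norm \<Omega> \<phi> (\<lambda>x. w x - v k x)) \<longlonglongrightarrow> 0"
  proof (rule tendsto_sandwich[where f="\<lambda>_. 0"])
    show "\<forall>\<^sub>F k in sequentially. 0 \<le> L1phi_norm \<Omega> \<phi> (\<lambda>x. w x - v k x)" by simp
    show "\<forall>\<^sub>F k in sequentially. L1phi_norm \<Omega> \<phi> (\<lambda>x. w x - v k x) \<le> ennreal K * L1phi_norm \<Omega> (phi_pow \<phi> p) (\<lambda>x. w x - v k x)"
      using norm_embed by simp
    show "(\<lambda>k. ennreal K * L1phi_norm \<Omega> (phi_pow \<phi> p) (\<lambda>x. w x - v k x)) \<longlonglongrightarrow> 0"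
      using tendsto_mult_ennreal[OF tendsto_const v(2), of "ennreal K"] by simp
  qed simp
  have A: "L1phi \<Omega> \<phi> w" unfolding L1phi_def using w(1) fin by simp
  show ?thesis unfolding L1phi0_def
    by (intro conjI exI[of _ v]) (use A v(1) lim in auto)
qed

end



lemma F_bound:
  fixes \<Omega> :: "(real^'n) set" and \<phi> :: "real^'n \<Rightarrow> real \<Rightarrow> ennreal" and G :: "real^'n \<Rightarrow> real"
  assumes \<Omega>m: "\<Omega> \<in> sets lebesgue" and m\<Omega>: "emeasure lebesgue \<Omega> = ennreal m"
    and d: "d > 0" and q: "q \<ge> 1"
  shows "(\<integral>\<^sup>+x\<in>\<Omega>. \<phi> x (G x) \<partial>lebesgue) \<le> ennreal d * ennreal m +
           ennreal (d powr (1 - q)) * (\<integral>\<^sup>+x\<in>\<Omega>. ennpow (\<phi> x (G x)) q \<partial>lebesgue)"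
proof -
  have "(\<integral>\<^sup>+x\<in>\<Omega>. \<phi> x (G x) \<partial>lebesgue) \<le>
      (\<integral>\<^sup>+x. ennreal d * indicator \<Omega> x + ennreal (d powr (1 - q)) * (ennpow (\<phi> x (G x)) q * indicator \<Omega> x) \<partial>lebesgue)"
  proof (rule nn_integral_mono)
    fix x
    have "\<phi> x (G x) \<le> ennreal d + ennreal (d powr (1 - q)) * ennpow (\<phi> x (G x)) q"
      using d q by (rule ennpow_bound)
    then show "\<phi> x (G x) * indicator \<Omega> x \<le> ennreal d * indicator \<Omega> x + ennreal (d powr (1 - q)) * (ennpow (\<phi> x (G x)) q * indicator \<Omega> x)"
      by (simp add: indicator_def)
  qed
  also have "\<dots> \<le> (\<integral>\<^sup>+x. ennreal d * indicator \<Omega> x \<partial>lebesgue) + (\<integral>\<^sup>+x. ennreal (d powr (1 - q)) * (ennpow (\<phi> x (G x)) q * indicator \<Omega> x) \<partial>lebesgue)"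
    apply (rule nn_add_le)
     apply (rule simple_function_mult)
      apply simp
     apply (rule simple_function_indicator[OF \<Omega>m])
    apply (simp add: indicator_def)
    done
  also have "(\<integral>\<^sup>+x. ennreal d * indicator \<Omega> x \<partial>lebesgue) = ennreal d * ennreal m"
    using \<Omega>m m\<Omega> by (simp add: nn_integral_cmult_indicator)
  also have "(\<integral>\<^sup>+x. ennreal (d powr (1 - q)) * (ennpow (\<phi> x (G x)) q * indicator \<Omega> x) \<partial>lebesgue)
     \<le> ennreal (d powr (1 - q)) * (\<integral>\<^sup>+x\<in>\<Omega>. ennpow (\<phi> x (G x)) q \<partial>lebesgue)"
    by (rule nn_cmult_le) simp
  finally show ?thesis by (simp add: add_left_mono)
qed

theorem mainTheorem7:
  fixes \<Omega> :: "(real^'n) set" and \<phi> :: "real^'n \<Rightarrow> real \<Rightarrow> ennreal"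
    and r :: real and u0 u :: "real^'n \<Rightarrow> real"
    and us :: "nat \<Rightarrow> real^'n \<Rightarrow> real" and p :: "nat \<Rightarrow> real"
  assumes "open \<Omega>" "connected \<Omega>" "bounded \<Omega>" "\<Omega> \<noteq> {}"
    and "Phi_w \<Omega> \<phi>"
    and "r > 1"
    and "L1phi \<Omega> (phi_pow \<phi> r) u0"
    and "integrable (lebesgue_on \<Omega>) u"
    and "L1_conv \<Omega> us u"
    and "\<And>i. p i \<in> {1<..<r}"
    and "p \<longlonglongrightarrow> 1"
  shows "E_1 \<Omega> \<phi> u0 u \<le> liminf (\<lambda>i. E_p \<Omega> \<phi> u0 (p i) (us i))"
proof -
  have lm: "\<Omega> \<in> lmeasurable" using assms(3,1) by (rule lmeasurable_open)
  have \<Omega>m: "\<Omega> \<in> sets lebesgue" using lm by auto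
  define m where "m = measure lebesgue \<Omega>"
  have m\<Omega>: "emeasure lebesgue \<Omega> = ennreal m"
    unfolding m_def using lm by (intro emeasure_eq_ennreal_measure fmeasurableD2)
  have m0: "m \<ge> 0" unfolding m_def by simp
  obtain L where L: "L \<ge> 1" and AEL: "AE x in lebesgue_on \<Omega>.
          mono_on {0..} (\<phi> x) \<and> \<phi> x 0 = 0 \<and> ((\<phi> x) \<longlongrightarrow> 0) (at_right 0) \<and>
          ((\<phi> x) \<longlongrightarrow> top) at_top \<and>
          (\<forall>s t. 0 < s \<and> s \<le> t \<longrightarrow> \<phi> x s / ennreal s \<le> ennreal L * (\<phi> x t / ennreal t))"
    using assms(5) unfolding Phi_w_def by blast
  have AE2: "AE x in lebesgue. x \<in> \<Omega> \<longrightarrow> (\<phi> x 0 = 0 \<and>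
       (\<forall>s t. 0 < s \<and> s \<le> t \<longrightarrow> \<phi> x s / ennreal s \<le> ennreal L * (\<phi> x t / ennreal t)))"
  proof -
    have "AE x in lebesgue. x \<in> \<Omega> \<longrightarrow> (mono_on {0..} (\<phi> x) \<and> \<phi> x 0 = 0 \<and> ((\<phi> x) \<longlongrightarrow> 0) (at_right 0) \<and>
          ((\<phi> x) \<longlongrightarrow> top) at_top \<and>
          (\<forall>s t. 0 < s \<and> s \<le> t \<longrightarrow> \<phi> x s / ennreal s \<le> ennreal L * (\<phi> x t / ennreal t)))"
      using AEL \<Omega>m by (subst AE_restrict_space_iff[symmetric]) auto
    then show ?thesis by (rule eventually_mono) blast
  qed
  have embi: "emb \<Omega> \<phi> m L q" if "q \<ge> 1" for q
    using \<Omega>m m\<Omega> m0 L AE2 that by unfold_locales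
  have p1: "p i \<ge> 1" for i using assms(10)[of i] by simp
  define Ep where "Ep i = E_p \<Omega> \<phi> u0 (p i) (us i)" for i
  define F where "F i = (\<integral>\<^sup>+x\<in>\<Omega>. \<phi> x (norm (grad \<Omega> (us i) x)) \<partial>lebesgue)" for i
  show ?thesis
  proof (cases "liminf Ep = top")
    case True
    then show ?thesis unfolding Ep_def by simp
  next
    case False
    define A where "A = liminf Ep"
    have Afin: "A < top" using False unfolding A_def by (simp add: top.not_eq_extremum)
    obtain \<sigma> :: "nat \<Rightarrow> nat" where \<sigma>: "strict_mono \<sigma>" "(Ep \<circ> \<sigma>) \<longlonglongrightarrow> A"
      unfolding A_def using liminf_subseq_lim by blast
    have "eventually (\<lambda>j. (Ep \<circ> \<sigma>) j < top) sequentially"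
      using \<sigma>(2) Afin by (rule order_tendstoD(2))
    then obtain N where N: "\<And>j. j \<ge> N \<Longrightarrow> Ep (\<sigma> j) < top"
      unfolding eventually_sequentially by auto
    define \<tau> where "\<tau> j = \<sigma> (j + N)" for j
    have \<tau>mono: "strict_mono \<tau>"
      using \<sigma>(1) unfolding \<tau>_def strict_mono_def by simp
    have \<tau>lim: "(\<lambda>j. Ep (\<tau> j)) \<longlonglongrightarrow> A"
      using LIMSEQ_ignore_initial_segment[OF \<sigma>(2), of N] unfolding \<tau>_def by simp
    have \<tau>fin: "Ep (\<tau> j) < top" for j unfolding \<tau>_def by (rule N) simp
    have L0: "L1phi0 \<Omega> (phi_pow \<phi> (p (\<tau> j))) (\<lambda>x. us (\<tau> j) x - u0 x)" for j
      using \<tau>fin[of j] unfolding Ep_def E_p_def by (auto split: if_splits)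
    have Epeq: "Ep (\<tau> j) = (\<integral>\<^sup>+x\<in>\<Omega>. ennpow (\<phi> x (norm (grad \<Omega> (us (\<tau> j)) x))) (p (\<tau> j)) \<partial>lebesgue)" for j
      using L0[of j] unfolding Ep_def E_p_def by simp
    have L0\<phi>: "L1phi0 \<Omega> \<phi> (\<lambda>x. us (\<tau> j) x - u0 x)" for j
      using emb.L1phi0_embed[OF embi[OF p1[of "\<tau> j"]] L0[of j]] .
    have conv: "L1_conv \<Omega> (\<lambda>j. us (\<tau> j)) u"
    proof -
      have "(\<lambda>i. L1_norm \<Omega> (\<lambda>x. us i x - u x)) \<longlonglongrightarrow> 0" and "\<forall>i. integrable (lebesgue_on \<Omega>) (us i)"
        and "integrable (lebesgue_on \<Omega>) u"
        using assms(9) unfolding L1_conv_def by auto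
      then show ?thesis unfolding L1_conv_def
        using LIMSEQ_subseq_LIMSEQ[OF _ \<tau>mono] by (auto simp: o_def)
    qed
    have E1le: "E_1 \<Omega> \<phi> u0 u \<le> liminf (\<lambda>j. F (\<tau> j))"
      unfolding E_1_def
    proof (rule Inf_lower)
      show "liminf (\<lambda>j. F (\<tau> j)) \<in> {liminf (\<lambda>i. \<integral>\<^sup>+ x\<in>\<Omega>. \<phi> x (norm (grad \<Omega> (v i) x)) \<partial>lebesgue) | v.
        (\<forall>i. L1phi0 \<Omega> \<phi> (\<lambda>x. v i x - u0 x)) \<and> L1_conv \<Omega> v u}"
        unfolding F_def
        by (rule CollectI, rule exI[of _ "\<lambda>j. us (\<tau> j)"]) (use L0\<phi> conv in auto)
    qed
    have "liminf (\<lambda>j. F (\<tau> j)) \<le> A"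
    proof (rule ennreal_le_epsilon)
      fix e :: real assume e: "0 < e"
      define d where "d = e / (m + 1)"
      have d: "d > 0" unfolding d_def using e m0 by simp
      have dm: "d * m \<le> e" unfolding d_def using e m0 by (simp add: field_simps)
      define R where "R j = ennreal d * ennreal m + ennreal (d powr (1 - p (\<tau> j))) * Ep (\<tau> j)" for j
      have FR: "F (\<tau> j) \<le> R j" for j
        unfolding F_def R_def Epeq using F_bound[OF \<Omega>m m\<Omega> d p1] .
      have plim: "(\<lambda>j. p (\<tau> j)) \<longlonglongrightarrow> 1"
        using LIMSEQ_subseq_LIMSEQ[OF assms(11) \<tau>mono] by (simp add: o_def)
      have "(\<lambda>j. d powr (1 - p (\<tau> j))) \<longlonglongrightarrow> d powr (1 - 1)"
        using d by (intro tendsto_intros plim) auto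
      then have clim: "(\<lambda>j. ennreal (d powr (1 - p (\<tau> j)))) \<longlonglongrightarrow> ennreal 1"
        using d by (intro tendsto_ennrealI) simp
      have "R \<longlonglongrightarrow> ennreal d * ennreal m + ennreal 1 * A"
        unfolding R_def
        by (intro tendsto_add tendsto_const tendsto_mult_ennreal clim \<tau>lim) simp
      then have RA: "liminf R = ennreal d * ennreal m + A"
        by (simp add: lim_imp_Liminf)
      have "liminf (\<lambda>j. F (\<tau> j)) \<le> liminf R"
        using FR by (intro Liminf_mono) simp
      also have "\<dots> = ennreal (d * m) + A" using RA d m0 by (simp add: ennreal_mult)
      also have "\<dots> \<le> ennreal e + A" using dm by (intro add_right_mono ennreal_leI)
      finally show "liminf (\<lambda>j. F (\<tau> j)) \<le> A + ennreal e" by (simp add: add.commute)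
    qed
    then show ?thesis using E1le unfolding A_def Ep_def by simp
  qed
qed

end
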